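(* Let $n,m,k$ be positive integers with $k\mid n$, let $p\in(0,1/2)$, and let $\mu_1,\dots,\mu_k\in\{0,1\}^m$ be fixed vectors satisfying the non-degeneracy assumption. Let $V=V_1\sqcup\dots\sqcup V_k$ with $|V_i|=n/k$, where every person $v\in V_i$ answers question $s\in\{1,\dots,m\}$ with $v(s)=\mu_i(s)$ with probability $1-p$ and $v(s)=1-\mu_i(s)$ with probability $p$, independently across persons and questions. Let $\mathcal P$ be the set of cuts $\{A_s^0,A_s^1\}$, $s=1,\dots,m$, with $A_s^y=\{v\in V: v(s)=y\}$. Let $a=\alpha n$ be the agreement parameter and suppose $p<a/n$. Then the probability that there is a $\mathcal P$-tangle which is not equal to any of the mindsets $\mu_1,\dots,\mu_k$ is at most $k\,m\,\exp\bigl(-2(\alpha-p)^2n/k\bigr)$.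
   Context: An orientation of $\mathcal P$ chooses one side of every cut; it is identified with $\tau\in\{0,1\}^m$ by choosing the side $A_s^{\tau(s)}$ for question $s$. An orientation $O$ is a $\mathcal P$-tangle if for all (not necessarily distinct) chosen sides $A,B,C\in O$ we have $|A\cap B\cap C|\ge a$. Non-degeneracy assumption: whenever $\tau\in\{0,1\}^m$ has the property that for all $x,y,z\in\{1,\dots,m\}$ there exists a mindset $\mu_i$ with $\tau(x)=\mu_i(x)$, $\tau(y)=\mu_i(y)$ and $\tau(z)=\mu_i(z)$, then $\tau=\mu_j$ for some $j$. The probability is over the random answers. *)

theory Defs
  imports "HOL-Probability.Probability"
begin

text \<open>Persons are pairs (i,j): group i < k, index j < n div k (so |V_i| = n/k).
  Questions are s < m. Booleans encode {0,1} (True = 1).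
  A mindset is mu i :: nat => bool for i < k.\<close>

definition persons :: "nat \<Rightarrow> nat \<Rightarrow> (nat \<times> nat) set" where
  "persons n k = {0..<k} \<times> {0..<n div k}"

text \<open>Random flips: flip (v,s) = True with probability p, independently.
  Person v = (i,j) answers question s with mu i s, unless the flip occurs.\<close>

definition flip_pmf :: "nat \<Rightarrow> nat \<Rightarrow> nat \<Rightarrow> real \<Rightarrow> ((nat \<times> nat) \<times> nat \<Rightarrow> bool) pmf" where
  "flip_pmf n k m p = Pi_pmf (persons n k \<times> {0..<m}) False (\<lambda>_. bernoulli_pmf p)"

definition answer :: "(nat \<Rightarrow> nat \<Rightarrow> bool) \<Rightarrow> ((nat \<times> nat) \<times> nat \<Rightarrow> bool) \<Rightarrow> nat \<times> nat \<Rightarrow> nat \<Rightarrow> bool" where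
  "answer mu \<omega> v s = (if \<omega> (v, s) then \<not> mu (fst v) s else mu (fst v) s)"

definition side :: "nat \<Rightarrow> nat \<Rightarrow> (nat \<Rightarrow> nat \<Rightarrow> bool) \<Rightarrow> ((nat \<times> nat) \<times> nat \<Rightarrow> bool) \<Rightarrow> nat \<Rightarrow> bool \<Rightarrow> (nat \<times> nat) set" where
  "side n k mu \<omega> s y = {v \<in> persons n k. answer mu \<omega> v s = y}"

definition is_tangle :: "nat \<Rightarrow> nat \<Rightarrow> nat \<Rightarrow> (nat \<Rightarrow> nat \<Rightarrow> bool) \<Rightarrow> ((nat \<times> nat) \<times> nat \<Rightarrow> bool) \<Rightarrow> real \<Rightarrow> (nat \<Rightarrow> bool) \<Rightarrow> bool" where
  "is_tangle n k m mu \<omega> a tau =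
     (\<forall>x<m. \<forall>y<m. \<forall>z<m.
        real (card (side n k mu \<omega> x (tau x) \<inter> side n k mu \<omega> y (tau y) \<inter> side n k mu \<omega> z (tau z))) \<ge> a)"

definition non_degenerate :: "nat \<Rightarrow> nat \<Rightarrow> (nat \<Rightarrow> nat \<Rightarrow> bool) \<Rightarrow> bool" where
  "non_degenerate k m mu =
     (\<forall>tau :: nat \<Rightarrow> bool.
        (\<forall>x<m. \<forall>y<m. \<forall>z<m. \<exists>i<k. tau x = mu i x \<and> tau y = mu i y \<and> tau z = mu i z)
        \<longrightarrow> (\<exists>j<k. \<forall>s<m. tau s = mu j s))"

end

theory Submission
  imports Defs
begin

lemma count_dist:
  assumes "i < k" "s < m" and that: "p \<in> {0..1}"
  shows "map_pmf (\<lambda>\<omega>. card {j\<in>{..<n div k}. \<omega> ((i,j),s)}) (flip_pmf n k m p)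
         = binomial_pmf (n div k) p"
proof -
  define B where "B = (\<lambda>j. ((i,j),s)) ` {..<n div k}"
  have inj: "inj_on (\<lambda>j. ((i,j),s)) X" for X by (auto simp: inj_on_def)
  have cardB: "card B = n div k" unfolding B_def by (simp add: card_image[OF inj])
  have sub: "B \<subseteq> persons n k \<times> {0..<m}" using assms unfolding B_def persons_def by auto
  have fin: "finite (persons n k \<times> {0..<m})" unfolding persons_def by auto
  have "binomial_pmf (n div k) p = map_pmf (\<lambda>f. card {x\<in>B. f x}) (Pi_pmf B False (\<lambda>_. bernoulli_pmf p))"
    by (rule binomial_pmf_altdef') (use that cardB B_def in auto)
  also have "Pi_pmf B False (\<lambda>_. bernoulli_pmf p) = map_pmf (\<lambda>f x. if x \<in> B then f x else False) (flip_pmf n k m p)"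
    unfolding flip_pmf_def by (rule Pi_pmf_subset[OF fin sub])
  also have "map_pmf (\<lambda>f. card {x\<in>B. f x}) \<dots> = map_pmf (\<lambda>\<omega>. card {x\<in>B. \<omega> x}) (flip_pmf n k m p)"
    unfolding map_pmf_comp by (intro map_pmf_cong refl arg_cong[where f=card]) auto
  also have "\<dots> = map_pmf (\<lambda>\<omega>. card {j\<in>{..<n div k}. \<omega> ((i,j),s)}) (flip_pmf n k m p)"
  proof (rule map_pmf_cong[OF refl])
    fix \<omega> :: "(nat \<times> nat) \<times> nat \<Rightarrow> bool"
    have "{x\<in>B. \<omega> x} = (\<lambda>j. ((i,j),s)) ` {j\<in>{..<n div k}. \<omega> ((i,j),s)}"
      unfolding B_def by auto
    then show "card {x\<in>B. \<omega> x} = card {j\<in>{..<n div k}. \<omega> ((i,j),s)}"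
      by (simp add: card_image[OF inj])
  qed
  finally show ?thesis by simp
qed

theorem lemma2:
  fixes n m k :: nat and p \<alpha> :: real and mu :: "nat \<Rightarrow> nat \<Rightarrow> bool"
  assumes "n > 0" "m > 0" "k > 0" "k dvd n"
    and "0 < p" "p < 1/2"
    and "non_degenerate k m mu"
    and "p < (\<alpha> * real n) / real n"
  shows "measure_pmf.prob (flip_pmf n k m p)
           {\<omega>. \<exists>tau. is_tangle n k m mu \<omega> (\<alpha> * real n) tau \<and> (\<forall>i<k. \<exists>s<m. tau s \<noteq> mu i s)}
         \<le> real k * real m * exp (- 2 * (\<alpha> - p)^2 * real n / real k)"
proof -
  define N where "N = n div k"
  have NN: "real N = real n / real k" unfolding N_def using assms(4) by (rule real_of_nat_div)
  have nN: "real n = real k * real N" using NN assms(3) by simp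
  have N0: "N > 0" using assms(1,3,4) unfolding N_def
    by (metis dvd_div_eq_0_iff gr0I)
  have ap: "p < \<alpha>" using assms(8) assms(1) by simp
  define G where "G i s \<omega> = card {j\<in>{..<N}. \<omega> ((i,j),s)}" for i s and \<omega> :: "(nat \<times> nat) \<times> nat \<Rightarrow> bool"
  define E where "E ip = {\<omega>. \<alpha> * real N \<le> real (G (fst ip) (snd ip) \<omega>)}" for ip
  let ?ev = "{\<omega>. \<exists>tau. is_tangle n k m mu \<omega> (\<alpha> * real n) tau \<and> (\<forall>i<k. \<exists>s<m. tau s \<noteq> mu i s)}"
  have incl: "?ev \<subseteq> \<Union> (E ` ({0..<k} \<times> {0..<m}))"
  proof
    fix \<omega> assume "\<omega> \<in> ?ev"
    then obtain tau where tg: "is_tangle n k m mu \<omega> (\<alpha> * real n) tau"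
      and ne: "\<forall>i<k. \<exists>s<m. tau s \<noteq> mu i s" by blast
    have nd: "(\<forall>x<m. \<forall>y<m. \<forall>z<m. \<exists>i<k. tau x = mu i x \<and> tau y = mu i y \<and> tau z = mu i z)
        \<longrightarrow> (\<exists>j<k. \<forall>s<m. tau s = mu j s)"
      using spec[OF assms(7)[unfolded non_degenerate_def], of tau] .
    have "\<not> (\<exists>j<k. \<forall>s<m. tau s = mu j s)" using ne by metis
    with nd have "\<not> (\<forall>x<m. \<forall>y<m. \<forall>z<m. \<exists>i<k. tau x = mu i x \<and> tau y = mu i y \<and> tau z = mu i z)"
      by blast
    then obtain x y z where xyz: "x < m" "y < m" "z < m"
      and nox: "\<forall>i<k. \<not> (tau x = mu i x \<and> tau y = mu i y \<and> tau z = mu i z)"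
      by (auto simp only: not_all not_imp not_ex)
    define sc where "sc i = (if tau x \<noteq> mu i x then x else if tau y \<noteq> mu i y then y else z)" for i
    have sc_ne: "tau (sc i) \<noteq> mu i (sc i)" if "i < k" for i
      using nox that unfolding sc_def by auto
    have sc_m: "sc i < m" for i using xyz unfolding sc_def by auto
    define I where "I = side n k mu \<omega> x (tau x) \<inter> side n k mu \<omega> y (tau y) \<inter> side n k mu \<omega> z (tau z)"
    have cI: "\<alpha> * real n \<le> real (card I)" using tg xyz unfolding is_tangle_def I_def by blast
    have Isub: "I \<subseteq> (\<Union>i\<in>{..<k}. (\<lambda>j. (i,j)) ` {j\<in>{..<N}. \<omega> ((i,j), sc i)})"
    proof
      fix v assume vI: "v \<in> I"
      obtain i j where v: "v = (i,j)" by fastforce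
      have ij: "i < k" "j < N" using vI unfolding I_def side_def persons_def v N_def by auto
      have scx: "sc i = x \<or> sc i = y \<or> sc i = z" unfolding sc_def by simp
      have "v \<in> side n k mu \<omega> (sc i) (tau (sc i))"
        using scx by (elim disjE) (use vI in \<open>simp_all add: I_def\<close>)
      then have "answer mu \<omega> v (sc i) = tau (sc i)" unfolding side_def by auto
      then have "\<omega> (v, sc i)" using sc_ne[OF ij(1)] unfolding answer_def v by (auto split: if_splits)
      then show "v \<in> (\<Union>i\<in>{..<k}. (\<lambda>j. (i,j)) ` {j\<in>{..<N}. \<omega> ((i,j), sc i)})"
        using ij v by auto
    qed
    have "card I \<le> card (\<Union>i\<in>{..<k}. (\<lambda>j. (i,j)) ` {j\<in>{..<N}. \<omega> ((i,j), sc i)})"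
      by (rule card_mono[OF _ Isub]) auto
    also have "\<dots> \<le> (\<Sum>i<k. card ((\<lambda>j. (i,j)) ` {j\<in>{..<N}. \<omega> ((i,j), sc i)}))"
      by (rule card_UN_le) auto
    also have "\<dots> = (\<Sum>i<k. G i (sc i) \<omega>)"
      unfolding G_def by (intro sum.cong refl card_image) (auto simp: inj_on_def)
    finally have "card I \<le> (\<Sum>i<k. G i (sc i) \<omega>)" .
    then have "real (card I) \<le> (\<Sum>i<k. real (G i (sc i) \<omega>))"
      by (simp only: of_nat_sum[symmetric] of_nat_le_iff)
    with cI have le: "\<alpha> * real n \<le> (\<Sum>i<k. real (G i (sc i) \<omega>))" by linarith
    have "\<exists>i<k. \<alpha> * real N \<le> real (G i (sc i) \<omega>)"
    proof (rule ccontr)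
      assume "\<not> ?thesis"
      then have "\<And>i. i \<in> {..<k} \<Longrightarrow> real (G i (sc i) \<omega>) < \<alpha> * real N" by auto
      then have "(\<Sum>i<k. real (G i (sc i) \<omega>)) < (\<Sum>i<k. \<alpha> * real N)"
        using assms(3) by (intro sum_strict_mono) auto
      also have "\<dots> = \<alpha> * real n" using nN by simp
      finally show False using le by simp
    qed
    then obtain i where "i < k" "\<alpha> * real N \<le> real (G i (sc i) \<omega>)" by blast
    then show "\<omega> \<in> \<Union> (E ` ({0..<k} \<times> {0..<m}))"
      using sc_m unfolding E_def by (intro UN_I[of "(i, sc i)"]) auto
  qed
  have bound: "measure_pmf.prob (flip_pmf n k m p) (E ip) \<le> exp (- 2 * (\<alpha> - p)^2 * real n / real k)"
    if ipin: "ip \<in> {0..<k} \<times> {0..<m}" for ip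
  proof -
    obtain i s where ip: "ip = (i,s)" "i < k" "s < m" using ipin by (cases ip) auto
    have "measure_pmf.prob (flip_pmf n k m p) (E ip)
       = measure_pmf.prob (map_pmf (G i s) (flip_pmf n k m p)) {x. \<alpha> * real N \<le> real x}"
      unfolding E_def ip by (simp add: vimage_def)
    also have "map_pmf (G i s) (flip_pmf n k m p) = binomial_pmf N p"
      unfolding G_def N_def by (rule count_dist) (use ip assms(5,6) in auto)
    also have "{x. \<alpha> * real N \<le> real x} = {x. p + (\<alpha> - p) \<le> real x / real N}"
      using N0 by (auto simp: field_simps)
    also have "measure_pmf.prob (binomial_pmf N p) \<dots> \<le> exp (real_of_int (- 2 * int N) * (\<alpha> - p)\<^sup>2)"
      by (rule binomial_distribution.prob_ge') (use N0 ap assms(5,6) in \<open>auto simp: binomial_distribution_def\<close>)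
    also have "real_of_int (- 2 * int N) * (\<alpha> - p)\<^sup>2 = - 2 * (\<alpha> - p)^2 * real n / real k"
      using NN by simp
    finally show ?thesis .
  qed
  have "measure_pmf.prob (flip_pmf n k m p) ?ev \<le> measure_pmf.prob (flip_pmf n k m p) (\<Union> (E ` ({0..<k} \<times> {0..<m})))"
    by (rule measure_pmf.finite_measure_mono[OF incl]) simp
  also have "\<dots> \<le> (\<Sum>ip\<in>{0..<k} \<times> {0..<m}. measure_pmf.prob (flip_pmf n k m p) (E ip))"
    by (rule measure_pmf.finite_measure_subadditive_finite) auto
  also have "\<dots> \<le> (\<Sum>ip\<in>{0..<k} \<times> {0..<m}. exp (- 2 * (\<alpha> - p)^2 * real n / real k))"
    by (rule sum_mono[OF bound])
  also have "\<dots> = real k * real m * exp (- 2 * (\<alpha> - p)^2 * real n / real k)"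
    by simp
  finally show ?thesis .
qed

end
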